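(* In the Setting below, for any index $i$ and any two $C_i$-tests $S,S'\in\mathcal{T}$, either $L(S)\subseteq L(S')$, or $L(S')\subseteq L(S)$, or $L(S)\cap L(S')=\emptyset$.
   Context: A test $T$ on $[n]$ separates $i\neq j$ if $|\{i,j\}\cap T|=1$. The classes induced by a collection $\mathcal{T}'$ of tests are the equivalence classes of the relation "$i,j$ are not separated by any test of $\mathcal{T}'$". Setting: $\mathcal{T}$ is a collection of distinct tests on $[n]$ that is a test cover, and $\mathcal{F}\subseteq\mathcal{T}$ has the property that for every $T\in\mathcal{T}\setminus\mathcal{F}$, $\mathcal{F}\cup\{T\}$ induces at most one more class than $\mathcal{F}$, and for every two tests $T,T'\in\mathcal{T}\setminus\mathcal{F}$, $\mathcal{F}\cup\{T,T'\}$ induces at most two more classes than $\mathcal{F}$. Let $C_1,\dots,C_l$ be the classes induced by $\mathcal{F}$. For $C\subseteq[n]$, a test $S\in\mathcal{T}$ is a $C$-test if $S\cap C\neq\emptyset$ and $C\setminus S\neq\emptyset$; its local portion is $L(S)=S\cap C$ and global portion $G(S)=S\setminus C$. It is assumed that every $C_i$-test $S$ satisfies $|S\cap C_i|\le |C_i|/2$ (for each $i$). *)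

theory Defs
  imports Main
begin

definition is_test :: "nat \<Rightarrow> nat set \<Rightarrow> bool" where
  "is_test n T \<longleftrightarrow> T \<subseteq> {1..n}"

definition separates :: "nat set \<Rightarrow> nat \<Rightarrow> nat \<Rightarrow> bool" where
  "separates T i j \<longleftrightarrow> i \<noteq> j \<and> card ({i, j} \<inter> T) = 1"

definition test_cover :: "nat \<Rightarrow> nat set set \<Rightarrow> bool" where
  "test_cover n \<T> \<longleftrightarrow> (\<forall>T\<in>\<T>. is_test n T) \<and>
     (\<forall>i\<in>{1..n}. \<forall>j\<in>{1..n}. i \<noteq> j \<longrightarrow> (\<exists>T\<in>\<T>. separates T i j))"

definition not_separated :: "nat set set \<Rightarrow> nat \<Rightarrow> nat \<Rightarrow> bool" where
  "not_separated \<F> i j \<longleftrightarrow> (\<forall>T\<in>\<F>. \<not> separates T i j)"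

definition induced_classes :: "nat \<Rightarrow> nat set set \<Rightarrow> nat set set" where
  "induced_classes n \<F> = (\<lambda>i. {j \<in> {1..n}. not_separated \<F> i j}) ` {1..n}"

definition num_classes :: "nat \<Rightarrow> nat set set \<Rightarrow> nat" where
  "num_classes n \<F> = card (induced_classes n \<F>)"

definition is_C_test :: "nat set \<Rightarrow> nat set \<Rightarrow> bool" where
  "is_C_test C S \<longleftrightarrow> S \<inter> C \<noteq> {} \<and> C - S \<noteq> {}"

definition local_portion :: "nat set \<Rightarrow> nat set \<Rightarrow> nat set" where
  "local_portion C S = S \<inter> C"

definition global_portion :: "nat set \<Rightarrow> nat set \<Rightarrow> nat set" where
  "global_portion C S = S - C"

end

theory Submission
  imports Defs
begin

lemma sep_iff: "separates T i j \<longleftrightarrow> \<not> (i \<in> T \<longleftrightarrow> j \<in> T)"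
proof (cases "i = j")
  case True thus ?thesis by (simp add: separates_def)
next
  case False
  show ?thesis
  proof (cases "i \<in> T"; cases "j \<in> T")
  qed (use False in \<open>auto simp: separates_def Int_insert_left\<close>)
qed

definition cl :: "nat \<Rightarrow> nat set set \<Rightarrow> nat \<Rightarrow> nat set" where
  "cl n F x = {j\<in>{1..n}. \<forall>T\<in>F. x\<in>T \<longleftrightarrow> j\<in>T}"

lemma ic_eq: "induced_classes n F = cl n F ` {1..n}"
  unfolding induced_classes_def cl_def not_separated_def sep_iff by simp

lemma cl_same: "y \<in> cl n F x \<Longrightarrow> cl n F y = cl n F x"
  unfolding cl_def by auto

theorem mainTheorem10:
  fixes n :: nat and \<T> \<F> :: "nat set set" and C S S' :: "nat set"
  assumes cover: "test_cover n \<T>"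
    and sub: "\<F> \<subseteq> \<T>"
    and one: "\<And>T. T \<in> \<T> - \<F> \<Longrightarrow> num_classes n (\<F> \<union> {T}) \<le> num_classes n \<F> + 1"
    and two: "\<And>T T'. T \<in> \<T> - \<F> \<Longrightarrow> T' \<in> \<T> - \<F> \<Longrightarrow>
                num_classes n (\<F> \<union> {T, T'}) \<le> num_classes n \<F> + 2"
    and half: "\<And>D R. D \<in> induced_classes n \<F> \<Longrightarrow> R \<in> \<T> \<Longrightarrow> is_C_test D R \<Longrightarrow>
                2 * card (R \<inter> D) \<le> card D"
    and C: "C \<in> induced_classes n \<F>"
    and S: "S \<in> \<T>" "is_C_test C S"
    and S': "S' \<in> \<T>" "is_C_test C S'"
  shows "local_portion C S \<subseteq> local_portion C S' \<or> local_portion C S' \<subseteq> local_portion C S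
         \<or> local_portion C S \<inter> local_portion C S' = {}"
proof (rule ccontr)
  assume neg: "\<not> ?thesis"
  obtain c where c: "c \<in> {1..n}" "C = cl n \<F> c" using C by (auto simp: ic_eq)
  have notF: "R \<notin> \<F>" if "is_C_test C R" for R
  proof
    assume "R \<in> \<F>"
    from that obtain y z where "y \<in> R \<inter> C" "z \<in> C - R" by (auto simp: is_C_test_def)
    thus False using \<open>R \<in> \<F>\<close> c by (auto simp: cl_def)
  qed
  from neg obtain a b d where a: "a \<in> S \<inter> S' \<inter> C" and b: "b \<in> S \<inter> C - S'" and d: "d \<in> S' \<inter> C - S"
    by (auto simp: local_portion_def)
  have finC: "finite C" using c by (simp add: cl_def)
  have h1: "2 * card (S \<inter> C) \<le> card C" using half[OF C S] .
  have h2: "2 * card (S' \<inter> C) \<le> card C" using half[OF C S'] .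
  have "\<not> C \<subseteq> S \<union> S'"
  proof
    assume sub2: "C \<subseteq> S \<union> S'"
    have "C = (S \<inter> C) \<union> (S' \<inter> C)" using sub2 by blast
    hence "card C + card ((S \<inter> C) \<inter> (S' \<inter> C)) = card (S \<inter> C) + card (S' \<inter> C)"
      using card_Un_Int[of "S \<inter> C" "S' \<inter> C"] finC by simp
    moreover have "card ((S \<inter> C) \<inter> (S' \<inter> C)) > 0" using a finC by (auto simp: card_gt_0_iff)
    ultimately show False using h1 h2 by linarith
  qed
  then obtain e where e: "e \<in> C" "e \<notin> S" "e \<notin> S'" by blast
  define G where "G = \<F> \<union> {S, S'}"
  define h where "h X = {j\<in>{1..n}. \<exists>x\<in>X. \<forall>T\<in>\<F>. x\<in>T \<longleftrightarrow> j\<in>T}" for X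
  have hcl: "h (cl n G x) = cl n \<F> x" if "x \<in> {1..n}" for x
    using that unfolding h_def cl_def G_def by auto
  define new where "new = cl n G ` {1..n}"
  define old where "old = cl n \<F> ` {1..n}"
  define H where "H = {X\<in>new. h X = C}"
  have finnew: "finite new" unfolding new_def by simp
  have Cin: "C \<in> old" using c old_def by simp
  have "old - {C} \<subseteq> h ` (new - H)"
  proof
    fix D assume "D \<in> old - {C}"
    then obtain x where x: "x \<in> {1..n}" "D = cl n \<F> x" "D \<noteq> C" unfolding old_def by blast
    hence "cl n G x \<in> new - H" using hcl unfolding new_def H_def by auto
    thus "D \<in> h ` (new - H)" using hcl x by force
  qed
  hence c1: "card (old - {C}) \<le> card (new - H)"
    using finnew by (meson card_image_le finite_Diff order_trans card_mono finite_imageI)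
  have c2: "card old = card (old - {C}) + 1" using Cin card_Suc_Diff1[of old C]
    unfolding old_def by simp
  have inC: "x \<in> C \<Longrightarrow> x \<in> {1..n} \<and> cl n G x \<in> H" for x
  proof -
    assume "x \<in> C"
    hence xn: "x \<in> {1..n}" using c by (simp add: cl_def)
    have "cl n \<F> x = C" using cl_same \<open>x \<in> C\<close> c by metis
    thus ?thesis using xn hcl unfolding H_def new_def by auto
  qed
  have self: "x \<in> cl n G x" if "x \<in> {1..n}" for x using that by (simp add: cl_def)
  have memG: "y \<in> cl n G x \<Longrightarrow> (x \<in> S \<longleftrightarrow> y \<in> S) \<and> (x \<in> S' \<longleftrightarrow> y \<in> S')" for x y
    by (simp add: cl_def G_def)
  have sub4: "{cl n G a, cl n G b, cl n G d, cl n G e} \<subseteq> H" using inC a b d e by auto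
  have dist: "card {cl n G a, cl n G b, cl n G d, cl n G e} = 4"
  proof -
    have an: "a \<in> {1..n}" "b \<in> {1..n}" "d \<in> {1..n}" "e \<in> {1..n}" using inC a b d e by auto
    have "cl n G a \<noteq> cl n G b" using self[OF an(2)] memG[of b "a"] a b by auto
    moreover have "cl n G a \<noteq> cl n G d" using self[OF an(3)] memG[of d "a"] a d by auto
    moreover have "cl n G a \<noteq> cl n G e" using self[OF an(4)] memG[of e "a"] a e by auto
    moreover have "cl n G b \<noteq> cl n G d" using self[OF an(3)] memG[of d "b"] b d by auto
    moreover have "cl n G b \<noteq> cl n G e" using self[OF an(4)] memG[of e "b"] b e by auto
    moreover have "cl n G d \<noteq> cl n G e" using self[OF an(4)] memG[of e "d"] d e by auto
    ultimately show ?thesis by simp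
  qed
  have finH: "finite H" using finnew H_def by simp
  have c3: "card H \<ge> 4" using card_mono[OF finH sub4] dist by simp
  have c4: "card new = card (new - H) + card H"
    using finnew H_def by (metis (no_types, lifting) card_Diff_subset finH mem_Collect_eq subsetI add.commute le_add_diff_inverse2 card_mono)
  have "num_classes n G \<le> num_classes n \<F> + 2"
    using two[of S S'] S S' notF G_def by auto
  moreover have "num_classes n G = card new" "num_classes n \<F> = card old"
    by (simp_all add: num_classes_def ic_eq new_def old_def)
  ultimately show False using c1 c2 c3 c4 by linarith
qed

end
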